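(* Let $r \geq 5$ be odd and consider type $D_r$ realized in $\mathbb{R}^r$ with orthonormal basis $e_1,\dots,e_r$, simple roots $\alpha_i = e_i - e_{i+1}$ ($1\le i\le r-1$), $\alpha_r = e_{r-1}+e_r$. Let $C$ be the linear map with $C(e_1) = -e_r$, $C(e_i) = -e_i$ for $2 \le i \le r-1$, and $C(e_r) = e_1$. Then $C$ and $C^{-1}$ are rational elements of $W(D_r)$ and each has valency $1$ in the rationality graph $\Gamma(D_r)$: the only neighbor of $C$ is $s_{r-1}C$, and the only neighbor of $C^{-1}$ is $s_r C^{-1}$.
   Context: $W(D_r)$ is the Weyl group, generated by simple reflections $s_i$ ($s_i$ swaps $e_i, e_{i+1}$ for $i<r$; $s_r$ maps $e_{r-1}\mapsto -e_r$, $e_r \mapsto -e_{r-1}$). Positive roots $\Pi_+ = \{e_i \pm e_j : i<j\}$. $\alpha\le\beta$ iff $\beta-\alpha$ is a nonnegative integer combination of simple roots. For $A\subseteq\Pi_+$, $\mathrm{Adj}(A) = \{\alpha\in\Pi_+ : \exists\beta\in A,\ \alpha\le\beta\}$. For $u\in W$: $\nu^0(u) = u(\Pi_+)\cap\Pi_+$, $\nu^k(u) = u(\mathrm{Adj}\,\nu^{k-1}(u))\cap\Pi_+$; the sequence is descending and eventually constant with value $\nu(u)$; $u$ is rational iff $\nu(u)=\emptyset$. The rationality graph $\Gamma(D_r)$ has the rational elements as vertices, $u,v$ adjacent iff $u = s_i v$ for some $i$. *)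

theory Defs
  imports Main "HOL.Real"
begin

text \<open>Vectors of R^r are modelled as functions nat => real; only coordinates 1..r
  matter, and all maps considered fix the coordinates outside 1..r.\<close>

type_synonym vec = "nat \<Rightarrow> real"
type_synonym lmap = "vec \<Rightarrow> vec"

definition ee :: "nat \<Rightarrow> vec" where
  "ee i = (\<lambda>k. if k = i then 1 else 0)"

definition sref :: "nat \<Rightarrow> nat \<Rightarrow> lmap" where
  "sref r i x =
     (if i < r then (\<lambda>j. if j = i then x (i+1) else if j = i+1 then x i else x j)
      else (\<lambda>j. if j = r - 1 then - x r else if j = r then - x (r - 1) else x j))"

inductive_set weyl :: "nat \<Rightarrow> lmap set" for r :: nat where
  weyl_id: "id \<in> weyl r"
| weyl_step: "u \<in> weyl r \<Longrightarrow> i \<in> {1..r} \<Longrightarrow> sref r i \<circ> u \<in> weyl r"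

definition alpha :: "nat \<Rightarrow> nat \<Rightarrow> vec" where
  "alpha r i = (if i < r then (\<lambda>k. ee i k - ee (i+1) k)
                else (\<lambda>k. ee (r - 1) k + ee r k))"

definition posroots :: "nat \<Rightarrow> vec set" where
  "posroots r =
     {(\<lambda>k. ee i k + ee j k) | i j. 1 \<le> i \<and> i < j \<and> j \<le> r}
   \<union> {(\<lambda>k. ee i k - ee j k) | i j. 1 \<le> i \<and> i < j \<and> j \<le> r}"

definition root_le :: "nat \<Rightarrow> vec \<Rightarrow> vec \<Rightarrow> bool" where
  "root_le r a b \<longleftrightarrow>
     (\<exists>c :: nat \<Rightarrow> nat. \<forall>m. b m - a m = (\<Sum>k = 1..r. real (c k) * alpha r k m))"

definition Adj :: "nat \<Rightarrow> vec set \<Rightarrow> vec set" where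
  "Adj r A = {a \<in> posroots r. \<exists>b \<in> A. root_le r a b}"

fun nuk :: "nat \<Rightarrow> lmap \<Rightarrow> nat \<Rightarrow> vec set" where
  "nuk r u 0 = u ` posroots r \<inter> posroots r"
| "nuk r u (Suc k) = u ` Adj r (nuk r u k) \<inter> posroots r"

text \<open>u is rational iff the eventual (stable) value nu(u) of the sequence nu^k(u) is empty.\<close>
definition rational :: "nat \<Rightarrow> lmap \<Rightarrow> bool" where
  "rational r u \<longleftrightarrow> (\<exists>K. \<forall>k \<ge> K. nuk r u k = {})"

definition gamma_vertex :: "nat \<Rightarrow> lmap \<Rightarrow> bool" where
  "gamma_vertex r u \<longleftrightarrow> u \<in> weyl r \<and> rational r u"

definition gamma_adj :: "nat \<Rightarrow> lmap \<Rightarrow> lmap \<Rightarrow> bool" where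
  "gamma_adj r u v \<longleftrightarrow> gamma_vertex r u \<and> gamma_vertex r v \<and> (\<exists>i \<in> {1..r}. u = sref r i \<circ> v)"

definition gamma_neighbors :: "nat \<Rightarrow> lmap \<Rightarrow> lmap set" where
  "gamma_neighbors r u = {v. gamma_adj r u v}"

definition Cmap :: "nat \<Rightarrow> lmap" where
  "Cmap r x = (\<lambda>j. if j = 1 then x r
                   else if j = r then - x 1
                   else if 2 \<le> j \<and> j \<le> r - 1 then - x j
                   else x j)"

end

theory Submission
  imports Defs
begin

definition rv :: "nat \<Rightarrow> real \<Rightarrow> nat \<Rightarrow> real \<Rightarrow> vec" where
  "rv i s j t = (\<lambda>k. s * ee i k + t * ee j k)"

lemma sum_w_ee: "(\<Sum>m = l..r. w m * ee i m) = (if l \<le> i \<and> i \<le> r then w i else 0)"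
  by (simp add: ee_def if_distrib sum.delta cong: if_cong)

lemma mono_fun:
  assumes "root_le r a b" and "\<And>k. 1 \<le> k \<Longrightarrow> k \<le> r \<Longrightarrow> 0 \<le> (\<Sum>m = 1..r. w m * alpha r k m)"
  shows "(\<Sum>m = 1..r. w m * a m) \<le> (\<Sum>m = 1..r. w m * b m)"
proof -
  obtain c :: "nat \<Rightarrow> nat" where c: "\<And>m. b m - a m = (\<Sum>k = 1..r. real (c k) * alpha r k m)"
    using assms(1) unfolding root_le_def by blast
  have "(\<Sum>m = 1..r. w m * b m) - (\<Sum>m = 1..r. w m * a m) = (\<Sum>m = 1..r. w m * (b m - a m))"
    by (simp add: sum_subtractf algebra_simps)
  also have "\<dots> = (\<Sum>m = 1..r. \<Sum>k = 1..r. real (c k) * (w m * alpha r k m))"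
    by (simp add: c sum_distrib_left algebra_simps)
  also have "\<dots> = (\<Sum>k = 1..r. real (c k) * (\<Sum>m = 1..r. w m * alpha r k m))"
    by (subst sum.swap) (simp add: sum_distrib_left)
  also have "\<dots> \<ge> 0"
    by (rule sum_nonneg) (use assms(2) in auto)
  finally show ?thesis by simp
qed

lemma sum_w_alpha:
  assumes "1 \<le> k" "k \<le> r" "r \<ge> 2"
  shows "(\<Sum>m = 1..r. w m * alpha r k m) = (if k < r then w k - w (k+1) else w (r-1) + w r)"
  using assms apply (simp add: alpha_def algebra_simps sum.distrib sum_subtractf sum_w_ee)
  by arith

lemma sum_w_rv: "1 \<le> i \<Longrightarrow> i \<le> r \<Longrightarrow> 1 \<le> j \<Longrightarrow> j \<le> r \<Longrightarrow>
   (\<Sum>m = 1..r. w m * rv i s j t m) = s * w i + t * w j"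
  by (simp add: rv_def algebra_simps sum.distrib sum_w_ee flip: sum_distrib_left)

lemma posroots_rv: "posroots r = {rv i 1 j t | i j t. 1 \<le> i \<and> i < j \<and> j \<le> r \<and> (t = 1 \<or> t = -1)}"
  unfolding posroots_def rv_def by (auto simp: algebra_simps; metis (no_types, opaque_lifting) diff_conv_add_uminus mult_minus_left mult_1)

lemma rv_in_pos: "1 \<le> i \<Longrightarrow> i < j \<Longrightarrow> j \<le> r \<Longrightarrow> t = 1 \<or> t = -1 \<Longrightarrow> rv i 1 j t \<in> posroots r"
  unfolding posroots_rv by blast

lemma rv_swap: "rv i s j t = rv j t i s"
  by (auto simp: rv_def)

lemma rv_notpos:
  assumes "i < j" "s = -1" "t = 1 \<or> t = -1"
  shows "rv i s j t \<notin> posroots r"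
proof
  assume "rv i s j t \<in> posroots r"
  then obtain i' j' t' where h: "1 \<le> i'" "i' < j'" "j' \<le> r" "rv i s j t = rv i' 1 j' t'"
    by (auto simp: posroots_rv)
  have e1: "rv i s j t i' = rv i' 1 j' t' i'" and e2: "rv i s j t i = rv i' 1 j' t' i"
    using h(4) by auto
  show False
  proof (cases "i' < i")
    case True
    then show ?thesis using e1 assms h by (auto simp: rv_def ee_def)
  next
    case False
    then show ?thesis using e1 e2 assms h by (cases "i' = i") (auto simp: rv_def ee_def split: if_splits)
  qed
qed

lemma rv_pos_iff:
  assumes "1 \<le> i" "i \<le> r" "1 \<le> j" "j \<le> r" "i \<noteq> j" "s = 1 \<or> s = -1" "t = 1 \<or> t = -1"
  shows "rv i s j t \<in> posroots r \<longleftrightarrow> (if i < j then s = 1 else t = 1)"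
proof (cases "i < j")
  case True
  then show ?thesis using assms rv_notpos[of i j s t r] by (auto simp: posroots_rv; blast)
next
  case False
  then have ji: "j < i" using assms by auto
  have rvs: "rv i s j t = rv j t i s" by (rule rv_swap)
  have "rv i s j t \<in> posroots r \<longleftrightarrow> t = 1"
  proof
    assume "rv i s j t \<in> posroots r"
    then show "t = 1" using rv_notpos[of j i t s r] rvs assms ji by auto
  next
    assume "t = 1"
    then show "rv i s j t \<in> posroots r" unfolding rvs posroots_rv using ji assms by blast
  qed
  then show ?thesis using False by simp
qed


definition Ci :: "nat \<Rightarrow> lmap" where
  "Ci r x = (\<lambda>j. if j = 1 then - x r
                   else if j = r then x 1
                   else if 2 \<le> j \<and> j \<le> r - 1 then - x j
                   else x j)"

definition piC :: "nat \<Rightarrow> nat \<Rightarrow> nat" where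
  "piC r i = (if i = 1 then r else if i = r then 1 else i)"
definition piD :: "nat \<Rightarrow> nat \<Rightarrow> nat" where
  "piD r i = (if i = 1 then r - 1 else if i = r - 1 then r else if i = r then 1 else i)"
definition sgC :: "nat \<Rightarrow> nat \<Rightarrow> real" where "sgC r i = (if i = r then 1 else -1)"
definition sgCi :: "nat \<Rightarrow> nat \<Rightarrow> real" where "sgCi r i = (if i = 1 then 1 else -1)"
definition sgE :: "nat \<Rightarrow> nat \<Rightarrow> real" where "sgE r i = (if i = r - 1 then 1 else -1)"

lemma C_lin: "Cmap r (rv i s j t) = (\<lambda>k. s * Cmap r (ee i) k + t * Cmap r (ee j) k)"
  by (simp add: fun_eq_iff Cmap_def rv_def)

lemma C_ee: "r \<ge> 3 \<Longrightarrow> i \<in> {1..r} \<Longrightarrow> Cmap r (ee i) = (\<lambda>k. sgC r i * ee (piC r i) k)"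
  unfolding fun_eq_iff Cmap_def piC_def sgC_def
  apply (cases "i = 1"; cases "i = r")
  apply (auto simp: ee_def)
  done

definition Dm :: "nat \<Rightarrow> lmap" where
  "Dm r x = (\<lambda>j. if j = 1 then x r else if j = r - 1 then - x 1 else if j = r then - x (r - 1)
                   else if 2 \<le> j \<and> j \<le> r - 2 then - x j else x j)"
definition Em :: "nat \<Rightarrow> lmap" where
  "Em r x = (\<lambda>j. if j = 1 then - x r else if j = r - 1 then - x 1 else if j = r then x (r - 1)
                   else if 2 \<le> j \<and> j \<le> r - 2 then - x j else x j)"

lemma D_eq: "r \<ge> 3 \<Longrightarrow> sref r (r-1) \<circ> Cmap r = Dm r"
  unfolding fun_eq_iff
proof (intro allI)
  fix x j assume r: "r \<ge> 3"
  show "(sref r (r - 1) \<circ> Cmap r) x j = Dm r x j"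
    using r apply (simp add: sref_def Cmap_def Dm_def) by arith
qed

lemma E_eq: "r \<ge> 3 \<Longrightarrow> sref r r \<circ> Ci r = Em r"
  unfolding fun_eq_iff
proof (intro allI)
  fix x j assume r: "r \<ge> 3"
  show "(sref r r \<circ> Ci r) x j = Em r x j"
    using r apply (simp add: sref_def Ci_def Em_def) by arith
qed

lemma Cmap_lin: "Cmap r (rv i s j t) = (\<lambda>k. s * Cmap r (ee i) k + t * Cmap r (ee j) k)"
  by (simp add: fun_eq_iff Cmap_def rv_def)

lemma Cmap_ee: "r \<ge> 3 \<Longrightarrow> i \<in> {1..r} \<Longrightarrow> Cmap r (ee i) = (\<lambda>k. sgC r i * ee (piC r i) k)"
  by (rule C_ee)

lemma Cmap_rv: "r \<ge> 3 \<Longrightarrow> i \<in> {1..r} \<Longrightarrow> j \<in> {1..r} \<Longrightarrow>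
  Cmap r (rv i s j t) = rv (piC r i) (s * sgC r i) (piC r j) (t * sgC r j)"
  unfolding Cmap_lin by (simp add: Cmap_ee rv_def fun_eq_iff)

lemma Ci_lin: "Ci r (rv i s j t) = (\<lambda>k. s * Ci r (ee i) k + t * Ci r (ee j) k)"
  by (simp add: fun_eq_iff Ci_def rv_def)

lemma Ci_ee: "r \<ge> 3 \<Longrightarrow> i \<in> {1..r} \<Longrightarrow> Ci r (ee i) = (\<lambda>k. sgCi r i * ee (piC r i) k)"
  unfolding fun_eq_iff Ci_def piC_def sgCi_def
  apply (cases "i = 1"; cases "i = r"; cases "i = r - 1")
  apply (auto simp: ee_def)
  done

lemma Ci_rv: "r \<ge> 3 \<Longrightarrow> i \<in> {1..r} \<Longrightarrow> j \<in> {1..r} \<Longrightarrow>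
  Ci r (rv i s j t) = rv (piC r i) (s * sgCi r i) (piC r j) (t * sgCi r j)"
  unfolding Ci_lin by (simp add: Ci_ee rv_def fun_eq_iff)

lemma Dm_lin: "Dm r (rv i s j t) = (\<lambda>k. s * Dm r (ee i) k + t * Dm r (ee j) k)"
  by (simp add: fun_eq_iff Dm_def rv_def)

lemma Dm_ee: "r \<ge> 3 \<Longrightarrow> i \<in> {1..r} \<Longrightarrow> Dm r (ee i) = (\<lambda>k. sgC r i * ee (piD r i) k)"
  unfolding fun_eq_iff Dm_def piD_def sgC_def
  apply (cases "i = 1"; cases "i = r"; cases "i = r - 1")
  apply (auto simp: ee_def)
  done

lemma Dm_rv: "r \<ge> 3 \<Longrightarrow> i \<in> {1..r} \<Longrightarrow> j \<in> {1..r} \<Longrightarrow>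
  Dm r (rv i s j t) = rv (piD r i) (s * sgC r i) (piD r j) (t * sgC r j)"
  unfolding Dm_lin by (simp add: Dm_ee rv_def fun_eq_iff)

lemma Em_lin: "Em r (rv i s j t) = (\<lambda>k. s * Em r (ee i) k + t * Em r (ee j) k)"
  by (simp add: fun_eq_iff Em_def rv_def)

lemma Em_ee: "r \<ge> 3 \<Longrightarrow> i \<in> {1..r} \<Longrightarrow> Em r (ee i) = (\<lambda>k. sgE r i * ee (piD r i) k)"
  unfolding fun_eq_iff Em_def piD_def sgE_def
  apply (cases "i = 1"; cases "i = r"; cases "i = r - 1")
  apply (auto simp: ee_def)
  done

lemma Em_rv: "r \<ge> 3 \<Longrightarrow> i \<in> {1..r} \<Longrightarrow> j \<in> {1..r} \<Longrightarrow>
  Em r (rv i s j t) = rv (piD r i) (s * sgE r i) (piD r j) (t * sgE r j)"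
  unfolding Em_lin by (simp add: Em_ee rv_def fun_eq_iff)

definition fn :: "nat \<Rightarrow> (nat \<Rightarrow> real) \<Rightarrow> vec \<Rightarrow> real" where
  "fn r w v = (\<Sum>m = 1..r. w m * v m)"
definition wS :: "nat \<Rightarrow> real" where "wS m = 1"
definition w1 :: "nat \<Rightarrow> real" where "w1 m = (if m = 1 then 1 else 0)"
definition wL :: "nat \<Rightarrow> nat \<Rightarrow> real" where "wL r m = (if m = r then -1 else 1)"

lemma fn_rv: "i \<in> {1..r} \<Longrightarrow> j \<in> {1..r} \<Longrightarrow> fn r w (rv i s j t) = s * w i + t * w j"
  unfolding fn_def by (rule sum_w_rv) auto

lemma Q_Cmap:
  assumes r: "r \<ge> 5" and a: "a \<in> posroots r" and ua: "Cmap r a \<in> posroots r"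
  shows "(fn r wS a = 2 \<and> fn r wS (Cmap r a) = 0) \<or>
         (fn r wS a = 0 \<and> fn r w1 a = 1 \<and> fn r wS (Cmap r a) = 0 \<and> fn r w1 (Cmap r a) = 0)"
proof -
  obtain i j t where ij: "1 \<le> i" "i < j" "j \<le> r" "t = 1 \<or> t = -1" and aeq: "a = rv i 1 j t"
    using a by (auto simp: posroots_rv)
  have ir: "i \<in> {1..r}" "j \<in> {1..r}" using ij by auto
  have pr: "piC r i \<in> {1..r}" "piC r j \<in> {1..r}" "piC r i \<noteq> piC r j"
    using ij r by (auto simp: piC_def)
  have img: "Cmap r a = rv (piC r i) (sgC r i) (piC r j) (t * sgC r j)"
    using aeq ir r Cmap_rv[of r i j 1 t] by simp
  have sg: "sgC r i = 1 \<or> sgC r i = -1" "t * sgC r j = 1 \<or> t * sgC r j = -1"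
    using ij by (auto simp: sgC_def)
  have pos: "if piC r i < piC r j then sgC r i = 1 else t * sgC r j = 1"
    using ua unfolding img using rv_pos_iff[OF _ _ _ _ pr(3) sg] pr by auto
  show ?thesis
    unfolding img unfolding aeq fn_rv[OF pr(1,2)] fn_rv[OF ir]
    using pos ij r by (auto simp: piC_def sgC_def wS_def w1_def wL_def split: if_splits)
qed

lemma Q_Ci:
  assumes r: "r \<ge> 5" and a: "a \<in> posroots r" and ua: "Ci r a \<in> posroots r"
  shows "(fn r (wL r) a = 2 \<and> fn r (wL r) (Ci r a) = 0) \<or>
         (fn r (wL r) a = 0 \<and> fn r w1 a = 1 \<and> fn r (wL r) (Ci r a) = 0 \<and> fn r w1 (Ci r a) = 0)"
proof -
  obtain i j t where ij: "1 \<le> i" "i < j" "j \<le> r" "t = 1 \<or> t = -1" and aeq: "a = rv i 1 j t"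
    using a by (auto simp: posroots_rv)
  have ir: "i \<in> {1..r}" "j \<in> {1..r}" using ij by auto
  have pr: "piC r i \<in> {1..r}" "piC r j \<in> {1..r}" "piC r i \<noteq> piC r j"
    using ij r by (auto simp: piC_def)
  have img: "Ci r a = rv (piC r i) (sgCi r i) (piC r j) (t * sgCi r j)"
    using aeq ir r Ci_rv[of r i j 1 t] by simp
  have sg: "sgCi r i = 1 \<or> sgCi r i = -1" "t * sgCi r j = 1 \<or> t * sgCi r j = -1"
    using ij by (auto simp: sgCi_def)
  have pos: "if piC r i < piC r j then sgCi r i = 1 else t * sgCi r j = 1"
    using ua unfolding img using rv_pos_iff[OF _ _ _ _ pr(3) sg] pr by auto
  show ?thesis
    unfolding img unfolding aeq fn_rv[OF pr(1,2)] fn_rv[OF ir]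
    using pos ij r by (auto simp: piC_def sgCi_def wS_def w1_def wL_def split: if_splits)
qed

lemma Q_Dm:
  assumes r: "r \<ge> 5" and a: "a \<in> posroots r" and ua: "Dm r a \<in> posroots r"
  shows "(fn r wS a = 2 \<and> fn r wS (Dm r a) = 0) \<or>
         (fn r wS a = 0 \<and> fn r w1 a = 1 \<and> fn r wS (Dm r a) = 0 \<and> fn r w1 (Dm r a) = 0)"
proof -
  obtain i j t where ij: "1 \<le> i" "i < j" "j \<le> r" "t = 1 \<or> t = -1" and aeq: "a = rv i 1 j t"
    using a by (auto simp: posroots_rv)
  have ir: "i \<in> {1..r}" "j \<in> {1..r}" using ij by auto
  have pr: "piD r i \<in> {1..r}" "piD r j \<in> {1..r}" "piD r i \<noteq> piD r j"
    using ij r by (auto simp: piD_def)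
  have img: "Dm r a = rv (piD r i) (sgC r i) (piD r j) (t * sgC r j)"
    using aeq ir r Dm_rv[of r i j 1 t] by simp
  have sg: "sgC r i = 1 \<or> sgC r i = -1" "t * sgC r j = 1 \<or> t * sgC r j = -1"
    using ij by (auto simp: sgC_def)
  have pos: "if piD r i < piD r j then sgC r i = 1 else t * sgC r j = 1"
    using ua unfolding img using rv_pos_iff[OF _ _ _ _ pr(3) sg] pr by auto
  show ?thesis
    unfolding img unfolding aeq fn_rv[OF pr(1,2)] fn_rv[OF ir]
    using pos ij r by (auto simp: piD_def sgC_def wS_def w1_def wL_def split: if_splits)
qed

lemma Q_Em:
  assumes r: "r \<ge> 5" and a: "a \<in> posroots r" and ua: "Em r a \<in> posroots r"
  shows "(fn r (wL r) a = 2 \<and> fn r (wL r) (Em r a) = 0) \<or>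
         (fn r (wL r) a = 0 \<and> fn r w1 a = 1 \<and> fn r (wL r) (Em r a) = 0 \<and> fn r w1 (Em r a) = 0)"
proof -
  obtain i j t where ij: "1 \<le> i" "i < j" "j \<le> r" "t = 1 \<or> t = -1" and aeq: "a = rv i 1 j t"
    using a by (auto simp: posroots_rv)
  have ir: "i \<in> {1..r}" "j \<in> {1..r}" using ij by auto
  have pr: "piD r i \<in> {1..r}" "piD r j \<in> {1..r}" "piD r i \<noteq> piD r j"
    using ij r by (auto simp: piD_def)
  have img: "Em r a = rv (piD r i) (sgE r i) (piD r j) (t * sgE r j)"
    using aeq ir r Em_rv[of r i j 1 t] by simp
  have sg: "sgE r i = 1 \<or> sgE r i = -1" "t * sgE r j = 1 \<or> t * sgE r j = -1"
    using ij by (auto simp: sgE_def)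
  have pos: "if piD r i < piD r j then sgE r i = 1 else t * sgE r j = 1"
    using ua unfolding img using rv_pos_iff[OF _ _ _ _ pr(3) sg] pr by auto
  show ?thesis
    unfolding img unfolding aeq fn_rv[OF pr(1,2)] fn_rv[OF ir]
    using pos ij r by (auto simp: piD_def sgE_def wS_def w1_def wL_def split: if_splits)
qed

lemma mono_gen: "root_le r a b \<Longrightarrow> r \<ge> 3 \<Longrightarrow>
   (\<And>k. 1 \<le> k \<Longrightarrow> k \<le> r \<Longrightarrow> 0 \<le> (if k < r then w k - w (k+1) else w (r-1) + w r))
   \<Longrightarrow> fn r w a \<le> fn r w b"
  unfolding fn_def
proof (rule mono_fun)
  fix k assume k: "1 \<le> k" "k \<le> r" and "r \<ge> 3"
    and h: "\<And>k. 1 \<le> k \<Longrightarrow> k \<le> r \<Longrightarrow> 0 \<le> (if k < r then w k - w (k+1) else w (r-1) + w r)"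
  then show "0 \<le> (\<Sum>m = 1..r. w m * alpha r k m)" using sum_w_alpha[of k r w] h[OF k] by simp
qed

lemma mono_S: "root_le r a b \<Longrightarrow> r \<ge> 3 \<Longrightarrow> fn r wS a \<le> fn r wS b"
  by (rule mono_gen) (auto simp: wS_def)
lemma mono_1: "root_le r a b \<Longrightarrow> r \<ge> 3 \<Longrightarrow> fn r w1 a \<le> fn r w1 b"
  by (rule mono_gen) (auto simp: w1_def)
lemma mono_L: "root_le r a b \<Longrightarrow> r \<ge> 3 \<Longrightarrow> fn r (wL r) a \<le> fn r (wL r) b"
  by (rule mono_gen) (auto simp: wL_def)

lemma nuk_empty: "nuk r u k = {} \<Longrightarrow> nuk r u (Suc k) = {}"
  by (simp add: Adj_def)

lemma rational_crit:
  fixes G F :: "vec \<Rightarrow> real"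
  assumes mG: "\<And>a b. root_le r a b \<Longrightarrow> G a \<le> G b"
    and mF: "\<And>a b. root_le r a b \<Longrightarrow> F a \<le> F b"
    and Q: "\<And>a. a \<in> posroots r \<Longrightarrow> u a \<in> posroots r \<Longrightarrow>
      (G a = 2 \<and> G (u a) = 0) \<or> (G a = 0 \<and> F a = 1 \<and> G (u a) = 0 \<and> F (u a) = 0)"
  shows "rational r u"
proof -
  have n0: "\<forall>x \<in> nuk r u 0. G x = 0" using Q by auto
  have n1: "\<forall>x \<in> nuk r u 1. G x = 0 \<and> F x = 0"
  proof
    fix x assume "x \<in> nuk r u 1"
    then obtain a b where "x = u a" "a \<in> posroots r" "u a \<in> posroots r" "b \<in> nuk r u 0" "root_le r a b"
      by (auto simp: Adj_def)
    moreover have "G a \<le> 0" using n0 mG calculation by fastforce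
    ultimately show "G x = 0 \<and> F x = 0" using Q by fastforce
  qed
  have n2: "nuk r u 2 = {}"
  proof (rule ccontr)
    assume "nuk r u 2 \<noteq> {}"
    then obtain x where "x \<in> nuk r u (Suc 1)" by (auto simp: numeral_2_eq_2)
    then have "x \<in> u ` Adj r (nuk r u 1) \<inter> posroots r" by (simp only: nuk.simps(2))
    then obtain a where a: "a \<in> Adj r (nuk r u 1)" "x = u a" "u a \<in> posroots r" by blast
    then obtain b where "a \<in> posroots r" "b \<in> nuk r u 1" "root_le r a b" unfolding Adj_def by blast
    note a this
    moreover have "G a \<le> 0" "F a \<le> 0" using n1 mG mF calculation by fastforce+
    ultimately show False using Q by fastforce
  qed
  have "\<forall>k \<ge> 2. nuk r u k = {}"
  proof (intro allI impI)
    fix k :: nat assume "k \<ge> 2"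
    then show "nuk r u k = {}"
    proof (induction k rule: dec_induct)
      case base show ?case by (rule n2)
    next
      case (step k) then show ?case using nuk_empty by blast
    qed
  qed
  then show ?thesis unfolding rational_def by blast
qed

lemma irrational_crit:
  assumes "\<gamma> \<in> posroots r" "u \<gamma> \<in> posroots r" "root_le r \<gamma> (u \<gamma>)"
  shows "\<not> rational r u"
proof -
  have "u \<gamma> \<in> nuk r u k" for k
  proof (induction k)
    case 0 then show ?case using assms by auto
  next
    case (Suc k)
    then have "\<gamma> \<in> Adj r (nuk r u k)" using assms by (auto simp: Adj_def)
    then show ?case using assms by auto
  qed
  then show ?thesis unfolding rational_def by blast
qed

lemma rat_C: "r \<ge> 5 \<Longrightarrow> rational r (Cmap r)"
  by (rule rational_crit[where G = "fn r wS" and F = "fn r w1"]) (auto intro: mono_S mono_1 dest: Q_Cmap)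
lemma rat_Ci: "r \<ge> 5 \<Longrightarrow> rational r (Ci r)"
  by (rule rational_crit[where G = "fn r (wL r)" and F = "fn r w1"]) (auto intro: mono_L mono_1 dest: Q_Ci)
lemma rat_D: "r \<ge> 5 \<Longrightarrow> rational r (Dm r)"
  by (rule rational_crit[where G = "fn r wS" and F = "fn r w1"]) (auto intro: mono_S mono_1 dest: Q_Dm)
lemma rat_E: "r \<ge> 5 \<Longrightarrow> rational r (Em r)"
  by (rule rational_crit[where G = "fn r (wL r)" and F = "fn r w1"]) (auto intro: mono_L mono_1 dest: Q_Em)

lemma root_le_refl: "root_le r a a"
  unfolding root_le_def by (rule exI[of _ "\<lambda>_. 0"]) simp

lemma root_le_trans: "root_le r a b \<Longrightarrow> root_le r b c \<Longrightarrow> root_le r a c"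
  unfolding root_le_def
proof (elim exE)
  fix c1 c2 :: "nat \<Rightarrow> nat"
  assume h1: "\<forall>m. b m - a m = (\<Sum>k = 1..r. real (c1 k) * alpha r k m)"
     and h2: "\<forall>m. c m - b m = (\<Sum>k = 1..r. real (c2 k) * alpha r k m)"
  show "\<exists>cc :: nat \<Rightarrow> nat. \<forall>m. c m - a m = (\<Sum>k = 1..r. real (cc k) * alpha r k m)"
  proof (rule exI[of _ "\<lambda>k. c1 k + c2 k"], intro allI)
    fix m
    have "c m - a m = (b m - a m) + (c m - b m)" by simp
    also have "\<dots> = (\<Sum>k = 1..r. real (c1 k + c2 k) * alpha r k m)"
      using h1 h2 by (simp add: sum.distrib algebra_simps)
    finally show "c m - a m = (\<Sum>k = 1..r. real (c1 k + c2 k) * alpha r k m)" .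
  qed
qed

lemma root_le_alpha: "k \<in> {1..r} \<Longrightarrow> (\<And>m. b m = a m + alpha r k m) \<Longrightarrow> root_le r a b"
  unfolding root_le_def
proof (rule exI[of _ "\<lambda>k'. if k' = k then 1 else 0"], intro allI)
  fix m assume k: "k \<in> {1..r}" and b: "\<And>m. b m = a m + alpha r k m"
  have "(\<Sum>k' = 1..r. real (if k' = k then 1 else 0) * alpha r k' m) = (\<Sum>k' = 1..r. if k' = k then alpha r k' m else 0)"
    by (rule sum.cong) auto
  also have "\<dots> = alpha r k m" using k by (simp only: sum.delta finite_atLeastAtMost) simp
  finally show "b m - a m = (\<Sum>k' = 1..r. real (if k' = k then 1 else 0) * alpha r k' m)" using b[of m] by simp
qed

lemma le_M12: "2 \<le> m \<Longrightarrow> m \<le> r \<Longrightarrow> root_le r (rv 1 1 2 (-1)) (rv 1 1 m (-1))"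
proof (induction m rule: dec_induct)
  case base show ?case by (rule root_le_refl)
next
  case (step m)
  have "root_le r (rv 1 1 m (-1)) (rv 1 1 (Suc m) (-1))"
    by (rule root_le_alpha[of m]) (use step in \<open>auto simp: rv_def alpha_def ee_def\<close>)
  then show ?case using step root_le_trans by auto
qed

lemma sref_inv: "r \<ge> 2 \<Longrightarrow> i \<in> {1..r} \<Longrightarrow> sref r i \<circ> sref r i = id"
  by (auto simp: fun_eq_iff sref_def)

lemma Cinv: "r \<ge> 2 \<Longrightarrow> inv (Cmap r) = Ci r"
  by (rule inv_unique_comp) (auto simp: fun_eq_iff Cmap_def Ci_def)

lemma irr_C:
  assumes r: "r \<ge> 5" and i: "i \<in> {1..r}" "i \<noteq> r - 1"
  shows "\<not> rational r (sref r i \<circ> Cmap r)"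
proof -
  consider "i = 1" | "2 \<le> i \<and> i \<le> r - 2" | "i = r" using i by force
  then show ?thesis
  proof cases
    case 1
    have "(sref r i \<circ> Cmap r) (rv 1 1 2 (-1)) = rv 1 1 r (-1)"
      using r 1 by (simp add: Cmap_rv piC_def sgC_def) (auto simp: fun_eq_iff sref_def rv_def ee_def)
    moreover have "root_le r (rv 1 1 2 (-1)) (rv 1 1 r (-1))" using le_M12 r by auto
    moreover have "rv 1 1 2 (-1) \<in> posroots r" "rv 1 1 r (-1) \<in> posroots r"
      using r by (auto intro!: rv_in_pos)
    ultimately show ?thesis using irrational_crit by metis
  next
    case 2
    have ii: "Suc i \<noteq> r" "Suc i \<le> r" "i \<noteq> 1" "i \<noteq> r" using r 2 by auto
    have "Cmap r (rv i 1 (i+1) (-1)) = rv i (-1) (i+1) 1"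
      using r 2 ii Cmap_rv[of r i "i+1" 1 "-1"] by (simp add: piC_def sgC_def)
    then have "(sref r i \<circ> Cmap r) (rv i 1 (i+1) (-1)) = rv i 1 (i+1) (-1)"
      using r 2 by (auto simp: fun_eq_iff sref_def rv_def ee_def)
    moreover have "rv i 1 (i+1) (-1) \<in> posroots r"
      using r 2 by (intro rv_in_pos) auto
    ultimately show ?thesis using irrational_crit root_le_refl by metis
  next
    case 3
    have "(sref r i \<circ> Cmap r) (rv 1 1 r 1) = rv 1 1 (r-1) 1"
      using r 3 by (simp add: Cmap_rv piC_def sgC_def) (auto simp: fun_eq_iff sref_def rv_def ee_def)
    moreover have "root_le r (rv 1 1 r 1) (rv 1 1 (r-1) 1)"
      by (rule root_le_alpha[of "r-1"]) (use r in \<open>auto simp: rv_def alpha_def ee_def\<close>)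
    moreover have "rv 1 1 r 1 \<in> posroots r" "rv 1 1 (r-1) 1 \<in> posroots r"
      using r by (auto intro!: rv_in_pos)
    ultimately show ?thesis using irrational_crit by metis
  qed
qed

lemma irr_Ci:
  assumes r: "r \<ge> 5" and i: "i \<in> {1..r}" "i \<noteq> r"
  shows "\<not> rational r (sref r i \<circ> Ci r)"
proof -
  consider "i = 1" | "2 \<le> i \<and> i \<le> r - 2" | "i = r - 1" using i by force
  then show ?thesis
  proof cases
    case 1
    have "(sref r i \<circ> Ci r) (rv 1 1 2 (-1)) = rv 1 1 r 1"
      using r 1 by (simp add: Ci_rv piC_def sgCi_def) (auto simp: fun_eq_iff sref_def rv_def ee_def)
    moreover have "root_le r (rv 1 1 2 (-1)) (rv 1 1 r 1)"
    proof -
      have "root_le r (rv 1 1 2 (-1)) (rv 1 1 (r-1) (-1))" using le_M12 r by auto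
      moreover have "root_le r (rv 1 1 (r-1) (-1)) (rv 1 1 r 1)"
        by (rule root_le_alpha[of "r"]) (use r in \<open>auto simp: rv_def alpha_def ee_def\<close>)
      ultimately show ?thesis by (rule root_le_trans)
    qed
    moreover have "rv 1 1 2 (-1) \<in> posroots r" "rv 1 1 r 1 \<in> posroots r"
      using r by (auto intro!: rv_in_pos)
    ultimately show ?thesis using irrational_crit by metis
  next
    case 2
    have ii: "Suc i \<noteq> r" "Suc i \<le> r" "i \<noteq> 1" "i \<noteq> r" using r 2 by auto
    have "Ci r (rv i 1 (i+1) (-1)) = rv i (-1) (i+1) 1"
      using r 2 ii Ci_rv[of r i "i+1" 1 "-1"] by (simp add: piC_def sgCi_def)
    then have "(sref r i \<circ> Ci r) (rv i 1 (i+1) (-1)) = rv i 1 (i+1) (-1)"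
      using r 2 by (auto simp: fun_eq_iff sref_def rv_def ee_def)
    moreover have "rv i 1 (i+1) (-1) \<in> posroots r"
      using r 2 by (intro rv_in_pos) auto
    ultimately show ?thesis using irrational_crit root_le_refl by metis
  next
    case 3
    have "(sref r i \<circ> Ci r) (rv 1 1 r (-1)) = rv 1 1 (r-1) 1"
      using r 3 by (simp add: Ci_rv piC_def sgCi_def) (auto simp: fun_eq_iff sref_def rv_def ee_def)
    moreover have "root_le r (rv 1 1 r (-1)) (rv 1 1 (r-1) 1)"
      by (rule root_le_alpha[of "r"]) (use r in \<open>auto simp: rv_def alpha_def ee_def\<close>)
    moreover have "rv 1 1 r (-1) \<in> posroots r" "rv 1 1 (r-1) 1 \<in> posroots r"
      using r by (auto intro!: rv_in_pos)
    ultimately show ?thesis using irrational_crit by metis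
  qed
qed

lemma weyl_comp: "u \<in> weyl r \<Longrightarrow> v \<in> weyl r \<Longrightarrow> u \<circ> v \<in> weyl r"
proof (induction u rule: weyl.induct)
  case weyl_id then show ?case by simp
next
  case (weyl_step u i)
  have "sref r i \<circ> (u \<circ> v) \<in> weyl r" by (rule weyl.weyl_step) (use weyl_step in blast)+
  then show ?case by (metis comp_assoc)
qed

lemma sref_w: "i \<in> {1..r} \<Longrightarrow> sref r i \<in> weyl r"
  using weyl.weyl_step[OF weyl.weyl_id, of i r] by simp

definition swp :: "nat \<Rightarrow> nat \<Rightarrow> lmap" where
  "swp a b x = (\<lambda>j. if j = a then x b else if j = b then x a else x j)"
definition ngs :: "nat set \<Rightarrow> lmap" where
  "ngs S x = (\<lambda>j. if j \<in> S then - x j else x j)"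

lemma swp_w': "Suc a \<le> b \<Longrightarrow> 1 \<le> a \<Longrightarrow> b \<le> r \<Longrightarrow> swp a b \<in> weyl r"
proof (induction b rule: dec_induct)
  case base
  have "swp a (Suc a) = sref r a" using base by (auto simp: fun_eq_iff swp_def sref_def)
  then show ?case using base sref_w[of a r] by simp
next
  case (step b)
  have "swp a (Suc b) = sref r b \<circ> swp a b \<circ> sref r b"
    using step by (auto simp: fun_eq_iff swp_def sref_def)
  moreover have "sref r b \<in> weyl r" using step by (intro sref_w) auto
  moreover have "swp a b \<in> weyl r" using step by auto
  ultimately show ?case by (metis weyl_comp)
qed

lemma swp_w: "1 \<le> a \<Longrightarrow> a < b \<Longrightarrow> b \<le> r \<Longrightarrow> swp a b \<in> weyl r"
  using swp_w'[of a b r] by simp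

lemma m_w: "d \<le> r - 2 \<Longrightarrow> r \<ge> 3 \<Longrightarrow> ngs {r - 1 - d, r} \<in> weyl r"
proof (induction d)
  case 0
  have "ngs {r - 1 - 0, r} = sref r r \<circ> sref r (r-1)"
    using 0 by (auto simp: fun_eq_iff ngs_def sref_def)
  moreover have "sref r r \<in> weyl r" "sref r (r-1) \<in> weyl r" using 0 by (auto intro!: sref_w)
  ultimately show ?case by (metis weyl_comp)
next
  case (Suc d)
  define j where "j = r - 1 - Suc d"
  have j: "1 \<le> j" "j + 1 < r" "r - 1 - d = j + 1" using Suc.prems unfolding j_def by auto
  have "ngs {j, r} = sref r j \<circ> ngs {j+1, r} \<circ> sref r j"
    using j by (auto simp: fun_eq_iff ngs_def sref_def)
  moreover have "ngs {j+1, r} \<in> weyl r" using Suc j by auto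
  moreover have "sref r j \<in> weyl r" using j by (intro sref_w) auto
  ultimately show ?case unfolding j_def[symmetric] j(3) by (metis weyl_comp)
qed

lemma mj_w: "1 \<le> j \<Longrightarrow> j \<le> r - 1 \<Longrightarrow> r \<ge> 3 \<Longrightarrow> ngs {j, r} \<in> weyl r"
  using m_w[of "r - 1 - j" r] by simp

lemma block_w: "2 * n + 1 \<le> r - 1 \<Longrightarrow> r \<ge> 3 \<Longrightarrow> ngs {r - (2*n+1)..r} \<in> weyl r"
proof (induction n)
  case 0
  have "{r - (2*0+1)..r} = {r - 1, r}" using 0 by auto
  then show ?case using mj_w[of "r-1" r] 0 by simp
next
  case (Suc n)
  define j where "j = r - (2 * Suc n + 1)"
  have j: "1 \<le> j" "j + 2 < r" "r - (2*n+1) = j + 2" using Suc.prems unfolding j_def by auto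
  have "ngs {j..r} = ngs {j, r} \<circ> ngs {j+1, r} \<circ> ngs {j+2..r}"
    using j by (auto simp: fun_eq_iff ngs_def)
  moreover have "ngs {j+2..r} \<in> weyl r" using Suc j by auto
  moreover have "ngs {j, r} \<in> weyl r" "ngs {j+1, r} \<in> weyl r" using j Suc.prems by (auto intro!: mj_w)
  ultimately show ?case unfolding j_def[symmetric] j(3) by (metis weyl_comp)
qed

lemma neg2_w: "r \<ge> 5 \<Longrightarrow> odd r \<Longrightarrow> ngs {2..r} \<in> weyl r"
proof -
  assume r: "r \<ge> 5" "odd r"
  then obtain m where m: "r = 2 * m + 1" by (auto elim: oddE)
  define n where "n = m - 1"
  have n: "r = 2 * n + 3" using m r unfolding n_def by auto
  show ?thesis using block_w[of n r] n r by simp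
qed

lemma C_w: "r \<ge> 5 \<Longrightarrow> odd r \<Longrightarrow> Cmap r \<in> weyl r"
proof -
  assume r: "r \<ge> 5" "odd r"
  have "Cmap r = ngs {2..r} \<circ> swp 1 r" using r by (auto simp: fun_eq_iff ngs_def swp_def Cmap_def)
  moreover have "swp 1 r \<in> weyl r" using r by (intro swp_w) auto
  ultimately show ?thesis using neg2_w[OF r] by (metis weyl_comp)
qed

lemma Ci_w: "r \<ge> 5 \<Longrightarrow> odd r \<Longrightarrow> Ci r \<in> weyl r"
proof -
  assume r: "r \<ge> 5" "odd r"
  have "Ci r = swp 1 r \<circ> ngs {2..r}" using r by (auto simp: fun_eq_iff ngs_def swp_def Ci_def)
  moreover have "swp 1 r \<in> weyl r" using r by (intro swp_w) auto
  ultimately show ?thesis using neg2_w[OF r] by (metis weyl_comp)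
qed

lemma sref_cancel: "r \<ge> 2 \<Longrightarrow> i \<in> {1..r} \<Longrightarrow> sref r i \<circ> (sref r i \<circ> v) = v"
  using sref_inv[of r i] by (metis comp_assoc id_comp)

lemma nbrs:
  assumes r: "r \<ge> 5" and k: "k \<in> {1..r}"
    and vu: "gamma_vertex r u" and vk: "gamma_vertex r (sref r k \<circ> u)"
    and irr: "\<And>i. i \<in> {1..r} \<Longrightarrow> i \<noteq> k \<Longrightarrow> \<not> rational r (sref r i \<circ> u)"
  shows "gamma_neighbors r u = {sref r k \<circ> u}"
proof (intro set_eqI iffI)
  fix v assume "v \<in> gamma_neighbors r u"
  then obtain i where i: "i \<in> {1..r}" "u = sref r i \<circ> v" and gv: "gamma_vertex r v"
    unfolding gamma_neighbors_def gamma_adj_def by blast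
  have v: "v = sref r i \<circ> u" using i sref_cancel[of r i v] r by simp
  have "i = k" using irr[OF i(1)] gv v unfolding gamma_vertex_def by blast
  then show "v \<in> {sref r k \<circ> u}" using v by simp
next
  fix v assume "v \<in> {sref r k \<circ> u}"
  then have v: "v = sref r k \<circ> u" by simp
  have "u = sref r k \<circ> v" using v sref_cancel[of r k u] r k by simp
  moreover have "gamma_vertex r v" using vk v by simp
  ultimately show "v \<in> gamma_neighbors r u"
    unfolding gamma_neighbors_def gamma_adj_def using vu k by blast
qed

theorem proposition4:
  fixes r :: nat
  assumes "r \<ge> 5" and "odd r"
  shows "gamma_vertex r (Cmap r) \<and> gamma_vertex r (inv (Cmap r))
       \<and> gamma_neighbors r (Cmap r) = {sref r (r - 1) \<circ> Cmap r}
       \<and> gamma_neighbors r (inv (Cmap r)) = {sref r r \<circ> inv (Cmap r)}"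
proof -
  have r: "r \<ge> 5" "odd r" using assms by auto
  have inv: "inv (Cmap r) = Ci r" using r by (intro Cinv) auto
  have vC: "gamma_vertex r (Cmap r)" unfolding gamma_vertex_def using C_w[OF r] rat_C r by auto
  have vCi: "gamma_vertex r (Ci r)" unfolding gamma_vertex_def using Ci_w[OF r] rat_Ci r by auto
  have vD: "gamma_vertex r (sref r (r - 1) \<circ> Cmap r)"
    unfolding gamma_vertex_def using weyl.weyl_step[OF C_w[OF r], of "r - 1"] rat_D[of r] D_eq[of r] r by auto
  have vE: "gamma_vertex r (sref r r \<circ> Ci r)"
    unfolding gamma_vertex_def using weyl.weyl_step[OF Ci_w[OF r], of r] rat_E[of r] E_eq[of r] r by auto
  have nC: "gamma_neighbors r (Cmap r) = {sref r (r - 1) \<circ> Cmap r}"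
    by (rule nbrs[OF r(1) _ vC vD]) (use r irr_C in auto)
  have nCi: "gamma_neighbors r (Ci r) = {sref r r \<circ> Ci r}"
    by (rule nbrs[OF r(1) _ vCi vE]) (use r irr_Ci in auto)
  show ?thesis unfolding inv using vC vCi nC nCi by blast
qed

end
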